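(* Let $A$ and $B$ be independent discrete random variables taking values in $\mathbb{R}^d$, with characteristic functions $\hat p_\alpha(t)=\mathbf{E}[\exp\{i t^{\mathrm T}A\}]$ and $\hat p_\beta(t)=\mathbf{E}[\exp\{i t^{\mathrm T}B\}]$. Then $$\varepsilon_{01}(A,B) \;=\; \lim_{\tau_1\to\infty}\lim_{\tau_2\to\infty}\cdots\lim_{\tau_d\to\infty}\Big(\prod_{j=1}^d \frac{1}{2\tau_j}\Big)\int_{B(\tau)}\lvert \hat p_\alpha(t)-\hat p_\beta(t)\rvert^2\,\lambda(\mathrm{d}t),$$ where $B(\tau)=\{x\in\mathbb{R}^d : -\tau_j\le x_j\le \tau_j \text{ for all } j\}$ and $\lambda$ is Lebesgue measure.
   Context: Discrete energy distance: for independent random variables $A,B$ taking values in a set on which equality is defined, $\varepsilon_{01}(A,B) = 2\mathbf{E}[1\{A\neq B\}] - \mathbf{E}[1\{A\neq A'\}] - \mathbf{E}[1\{B\neq B'\}]$, where $A'$ is an independent copy of $A$ (i.i.d. with $A$), $B'$ is an independent copy of $B$, and $1\{\cdot\}$ is the indicator function. *)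

theory Defs
  imports "HOL-Probability.Probability"
begin

text \<open>Points of R^d are represented as functions nat => real supported
  (extensionally) on the index set {..<d}; the Lebesgue measure on R^d is
  the product measure PiM {..<d} (\<lambda>_. lborel).\<close>

definition inner_d :: "nat \<Rightarrow> (nat \<Rightarrow> real) \<Rightarrow> (nat \<Rightarrow> real) \<Rightarrow> real" where
  "inner_d d t x = (\<Sum>j<d. t j * x j)"

definition char_fun :: "nat \<Rightarrow> (nat \<Rightarrow> real) pmf \<Rightarrow> (nat \<Rightarrow> real) \<Rightarrow> complex" where
  "char_fun d p t = measure_pmf.expectation p (\<lambda>x. cis (inner_d d t x))"

definition eps01 :: "'a pmf \<Rightarrow> 'a pmf \<Rightarrow> real" where
  "eps01 p q =
     2 * measure_pmf.expectation (pair_pmf p q) (\<lambda>(a, b). if a \<noteq> b then 1 else 0)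
     - measure_pmf.expectation (pair_pmf p p) (\<lambda>(a, a'). if a \<noteq> a' then 1 else 0)
     - measure_pmf.expectation (pair_pmf q q) (\<lambda>(b, b'). if b \<noteq> b' then 1 else 0)"

definition box_d :: "nat \<Rightarrow> (nat \<Rightarrow> real) \<Rightarrow> (nat \<Rightarrow> real) set" where
  "box_d d \<tau> = PiE {..<d} (\<lambda>j. {- \<tau> j .. \<tau> j})"

text \<open>Iterated limit: iter_lim n k F tau L means
  lim_{tau_k -> oo} lim_{tau_(k+1) -> oo} ... lim_{tau_(k+n-1) -> oo} F tau = L,
  where the remaining coordinates of tau are held fixed.\<close>
fun iter_lim :: "nat \<Rightarrow> nat \<Rightarrow> ((nat \<Rightarrow> real) \<Rightarrow> real) \<Rightarrow> (nat \<Rightarrow> real) \<Rightarrow> real \<Rightarrow> bool" where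
  "iter_lim 0 k F \<tau> L \<longleftrightarrow> F \<tau> = L"
| "iter_lim (Suc n) k F \<tau> L \<longleftrightarrow>
     (\<exists>G. (\<forall>\<^sub>F s in at_top. iter_lim n (Suc k) F (\<tau>(k := s)) (G s)) \<and> (G \<longlongrightarrow> L) at_top)"

end

theory Submission
  imports Defs
begin


definition S :: "real \<Rightarrow> real \<Rightarrow> complex" where
  "S s c = (1 / (2 * s)) *\<^sub>R (\<integral>t. indicator {-s..s} t *\<^sub>R cis (t * c) \<partial>lborel)"

lemma S_int: "integrable lborel (\<lambda>t. indicator {-s..s} t *\<^sub>R cis (t * c))"
  by (intro borel_integrable_compact compact_Icc continuous_intros)

lemma S_norm: "norm (S s c) \<le> 1"
proof (cases "s > 0")
  case True
  have "norm (\<integral>t. indicator {-s..s} t *\<^sub>R cis (t * c) \<partial>lborel)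
      \<le> (\<integral>t. norm (indicator {-s..s} t *\<^sub>R cis (t * c)) \<partial>lborel)"
    by (rule integral_norm_bound)
  also have "\<dots> = (\<integral>t. indicator {-s..s} t \<partial>lborel)"
    by (rule Bochner_Integration.integral_cong[OF refl]) (auto simp: indicator_def)
  also have "\<dots> = 2 * s" using True by simp
  finally show ?thesis using True by (simp add: S_def)
next
  case False
  then have "s < 0 \<or> s = 0" by auto
  then show ?thesis
  proof
    assume "s < 0" then have "{-s..s} = {}" by auto
    then show ?thesis by (simp add: S_def)
  qed (simp add: S_def)
qed

lemma S_int_val:
  assumes "c \<noteq> 0" "0 \<le> s"
  shows "(\<integral>t. indicator {-s..s} t *\<^sub>R cis (t * c) \<partial>lborel)
         = cis (s * c) / (\<i> * c) - cis (-s * c) / (\<i> * c)"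
proof (rule integral_FTC_atLeastAtMost)
  show "-s \<le> s" using assms by simp
  show "continuous_on {-s..s} (\<lambda>t. cis (t * c))" by (intro continuous_intros)
  fix x assume "-s \<le> x" "x \<le> s"
  have "((\<lambda>t. cis (t * c)) has_derivative (\<lambda>h. (h * c) *\<^sub>R (\<i> * cis (x * c)))) (at x within {-s..s})"
    by (intro derivative_eq_intros) auto
  then have "((\<lambda>t. cis (t * c) / (\<i> * c)) has_derivative (\<lambda>h. (h * c) *\<^sub>R (\<i> * cis (x * c)) / (\<i> * c))) (at x within {-s..s})"
    using assms by (intro derivative_eq_intros) auto
  moreover have "(\<lambda>h. (h * c) *\<^sub>R (\<i> * cis (x * c)) / (\<i> * c)) = (\<lambda>h. h *\<^sub>R cis (x * c))"
  proof
    fix h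
    have "complex_of_real c \<noteq> 0" using assms by simp
    then show "(h * c) *\<^sub>R (\<i> * cis (x * c)) / (\<i> * c) = h *\<^sub>R cis (x * c)"
      by (simp add: scaleR_conv_of_real field_simps)
  qed
  ultimately show "((\<lambda>t. cis (t * c) / (\<i> * c)) has_vector_derivative cis (x * c)) (at x within {-s..s})"
    by (simp add: has_vector_derivative_def)
qed

lemma S_lim: "((\<lambda>s. S s c) \<longlongrightarrow> (if c = 0 then 1 else 0)) at_top"
proof (cases "c = 0")
  case True
  have "\<forall>\<^sub>F s in at_top. S s c = 1"
    using eventually_gt_at_top[of "0::real"]
  proof eventually_elim
    case (elim s)
    have "(\<integral>t. indicator {-s..s} t *\<^sub>R cis (t * c) \<partial>lborel) = (\<integral>t. complex_of_real (indicator {-s..s} t) \<partial>lborel)"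
      by (rule Bochner_Integration.integral_cong[OF refl]) (auto simp: indicator_def True)
    also have "\<dots> = of_real (2 * s)" using elim by simp
    finally show ?case using elim by (simp add: S_def scaleR_conv_of_real)
  qed
  then show ?thesis using True by (simp add: tendsto_eventually)
next
  case False
  have b: "\<forall>\<^sub>F s in at_top. norm (S s c) \<le> 1 / (s * \<bar>c\<bar>)"
    using eventually_gt_at_top[of "0::real"]
  proof eventually_elim
    case (elim s)
    have "norm (cis (s * c) / (\<i> * c) - cis (-s * c) / (\<i> * c)) \<le> norm (cis (s * c) / (\<i> * c)) + norm (cis (-s * c) / (\<i> * c))"
      by (rule norm_triangle_ineq4)
    also have "\<dots> = 2 / \<bar>c\<bar>" by (simp add: norm_divide norm_mult)
    finally have le: "norm (\<integral>t. indicator {-s..s} t *\<^sub>R cis (t * c) \<partial>lborel) \<le> 2 / \<bar>c\<bar>"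
      using S_int_val[OF False, of s] elim by simp
    have "norm (S s c) = norm (\<integral>t. indicator {-s..s} t *\<^sub>R cis (t * c) \<partial>lborel) / (2 * s)"
      using elim by (simp add: S_def)
    also have "\<dots> \<le> (2 / \<bar>c\<bar>) / (2 * s)"
      using le elim by (intro divide_right_mono) auto
    also have "(2 / \<bar>c\<bar>) / (2 * s) = 1 / (s * \<bar>c\<bar>)" by simp
    finally show ?case .
  qed
  have "((\<lambda>s. 1 / (s * \<bar>c\<bar>)) \<longlongrightarrow> 0) at_top"
    using False by (intro tendsto_divide_0[OF tendsto_const] filterlim_at_top_imp_at_infinity filterlim_at_top_mult_tendsto_pos[OF tendsto_const] filterlim_ident) auto
  then have "((\<lambda>s. S s c) \<longlongrightarrow> 0) at_top"
    by (rule Lim_null_comparison[OF b])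
  then show ?thesis using False by simp
qed



definition cd :: "(nat \<Rightarrow> real) \<times> (nat \<Rightarrow> real) \<Rightarrow> nat \<Rightarrow> real" where
  "cd x j = fst x j - snd x j"

definition H :: "nat \<Rightarrow> ((nat \<Rightarrow> real) \<times> (nat \<Rightarrow> real)) pmf \<Rightarrow> (nat \<Rightarrow> real) \<Rightarrow> real" where
  "H d R \<tau> = Re (\<integral>x. (\<Prod>j<d. S (\<tau> j) (cd x j)) \<partial>R)"

definition V :: "nat \<Rightarrow> ((nat \<Rightarrow> real) \<times> (nat \<Rightarrow> real)) pmf \<Rightarrow> nat \<Rightarrow> (nat \<Rightarrow> real) \<Rightarrow> real" where
  "V d R k \<tau> = Re (\<integral>x. (\<Prod>j<k. S (\<tau> j) (cd x j)) * (if \<forall>j\<in>{k..<d}. cd x j = 0 then 1 else 0) \<partial>R)"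

lemma prodS_norm: "norm (\<Prod>j\<in>A. S (\<tau> j) (c j)) \<le> 1"
  unfolding prod_norm[symmetric] by (intro prod_le_1) (auto intro: S_norm)

lemma iter_lim_H:
  "n + k = d \<Longrightarrow> iter_lim n k (H d R) \<tau> (V d R k \<tau>)"
proof (induction n arbitrary: k \<tau>)
  case 0
  then show ?case by (simp add: H_def V_def)
next
  case (Suc n)
  define G where "G s = V d R (Suc k) (\<tau>(k := s))" for s
  have ev: "\<forall>\<^sub>F s in at_top. iter_lim n (Suc k) (H d R) (\<tau>(k := s)) (G s)"
    using Suc by (auto simp: G_def)
  have kd: "k < d" using Suc.prems by simp
  have G_eq: "G s = Re (\<integral>x. S s (cd x k) * ((\<Prod>j<k. S (\<tau> j) (cd x j)) * (if \<forall>j\<in>{Suc k..<d}. cd x j = 0 then 1 else 0)) \<partial>R)" for s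
    unfolding G_def V_def by (simp add: mult.assoc mult.left_commute)
  have ind: "(if \<forall>j\<in>{k..<d}. cd x j = 0 then 1 else 0 :: complex) =
      (if cd x k = 0 then 1 else 0) * (if \<forall>j\<in>{Suc k..<d}. cd x j = 0 then 1 else 0)" for x
  proof -
    have "{k..<d} = insert k {Suc k..<d}" using kd by auto
    then show ?thesis by auto
  qed
  have lim: "((\<lambda>s. \<integral>x. S s (cd x k) * ((\<Prod>j<k. S (\<tau> j) (cd x j)) * (if \<forall>j\<in>{Suc k..<d}. cd x j = 0 then 1 else 0)) \<partial>R)
     \<longlongrightarrow> (\<integral>x. (if cd x k = 0 then 1 else 0) * ((\<Prod>j<k. S (\<tau> j) (cd x j)) * (if \<forall>j\<in>{Suc k..<d}. cd x j = 0 then 1 else 0)) \<partial>R)) at_top"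
  proof (rule integral_dominated_convergence_at_top[where w = "\<lambda>_. 1"])
    show "AE x in measure_pmf R. ((\<lambda>s. S s (cd x k) * ((\<Prod>j<k. S (\<tau> j) (cd x j)) * (if \<forall>j\<in>{Suc k..<d}. cd x j = 0 then 1 else 0))) \<longlongrightarrow>
        (if cd x k = 0 then 1 else 0) * ((\<Prod>j<k. S (\<tau> j) (cd x j)) * (if \<forall>j\<in>{Suc k..<d}. cd x j = 0 then 1 else 0))) at_top"
      by (intro AE_I2 tendsto_mult_right S_lim)
    show "\<forall>\<^sub>F s in at_top. AE x in measure_pmf R. norm (S s (cd x k) * ((\<Prod>j<k. S (\<tau> j) (cd x j)) * (if \<forall>j\<in>{Suc k..<d}. cd x j = 0 then 1 else 0))) \<le> 1"
    proof (intro always_eventually allI AE_I2)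
      fix s x
      have "norm (S s (cd x k) * ((\<Prod>j<k. S (\<tau> j) (cd x j)) * (if \<forall>j\<in>{Suc k..<d}. cd x j = 0 then 1 else 0 :: complex)))
         = norm (S s (cd x k)) * (norm (\<Prod>j<k. S (\<tau> j) (cd x j)) * norm (if \<forall>j\<in>{Suc k..<d}. cd x j = 0 then 1 else 0 :: complex))"
        by (simp add: norm_mult)
      also have "\<dots> \<le> 1 * (1 * 1)"
        by (intro mult_mono S_norm prodS_norm) auto
      finally show "norm (S s (cd x k) * ((\<Prod>j<k. S (\<tau> j) (cd x j)) * (if \<forall>j\<in>{Suc k..<d}. cd x j = 0 then 1 else 0 :: complex))) \<le> 1" by simp
    qed
  qed auto
  have Geq: "G = (\<lambda>s. Re (\<integral>x. S s (cd x k) * ((\<Prod>j<k. S (\<tau> j) (cd x j)) * (if \<forall>j\<in>{Suc k..<d}. cd x j = 0 then 1 else 0)) \<partial>R))"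
    by (rule ext) (rule G_eq)
  have Veq: "V d R k \<tau> = Re (\<integral>x. (if cd x k = 0 then 1 else 0) * ((\<Prod>j<k. S (\<tau> j) (cd x j)) * (if \<forall>j\<in>{Suc k..<d}. cd x j = 0 then 1 else 0)) \<partial>R)"
    unfolding V_def ind by (simp add: ac_simps)
  have "(G \<longlongrightarrow> V d R k \<tau>) at_top"
    unfolding Geq Veq by (rule tendsto_Re[OF lim])
  then show ?case using ev by auto
qed



lemma integral_pair_pmf_real:
  fixes h :: "'a \<times> 'b \<Rightarrow> real"
  assumes bd: "\<And>x. \<bar>h x\<bar> \<le> Bd"
  shows "(\<integral>x. h x \<partial>pair_pmf A B) = (\<integral>a. \<integral>b. h (a, b) \<partial>B \<partial>A)"
proof -
  have "pair_pmf A B = bind_pmf A (\<lambda>a. map_pmf (Pair a) B)"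
    unfolding pair_pmf_def map_pmf_def by simp
  then have "(\<integral>x. h x \<partial>pair_pmf A B) = (\<integral>x. h x \<partial>(measure_pmf A \<bind> (\<lambda>a. measure_pmf (map_pmf (Pair a) B))))"
    by (simp add: measure_pmf_bind)
  also have "\<dots> = (\<integral>a. (\<integral>x. h x \<partial>measure_pmf (map_pmf (Pair a) B)) \<partial>A)"
    by (rule integral_bind[where K="count_space UNIV" and B=Bd and B'=1])
       (auto simp: bd measure_pmf_in_subprob_space measure_pmf.emeasure_space_1 intro: measure_pmf.finite_measure_axioms)
  also have "\<dots> = (\<integral>a. \<integral>b. h (a, b) \<partial>B \<partial>A)"
    by simp
  finally show ?thesis .
qed

lemma integral_pair_pmf_complex:
  fixes h :: "'a \<times> 'b \<Rightarrow> complex"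
  assumes bd: "\<And>x. norm (h x) \<le> Bd"
  shows "(\<integral>x. h x \<partial>pair_pmf A B) = (\<integral>a. \<integral>b. h (a, b) \<partial>B \<partial>A)"
proof -
  have ib: "integrable (measure_pmf M) f" if "\<And>x. norm (f x) \<le> Bd" for M and f :: "'c \<Rightarrow> complex"
    using that by (intro measure_pmf.integrable_const_bound[where B=Bd]) auto
  have ibr: "integrable (measure_pmf M) f" if "\<And>x. norm (f x) \<le> Bd" for M and f :: "'c \<Rightarrow> real"
    using that by (intro measure_pmf.integrable_const_bound[where B=Bd]) auto
  have Bd0: "0 \<le> Bd" using bd[of undefined] norm_ge_zero order_trans by blast
  have nb: "norm (\<integral>b. h (a, b) \<partial>B) \<le> Bd" for a
  proof -
    have "norm (\<integral>b. h (a, b) \<partial>B) \<le> (\<integral>b. norm (h (a, b)) \<partial>B)" by (rule integral_norm_bound)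
    also have "\<dots> \<le> (\<integral>b. Bd \<partial>B)"
      using bd Bd0 by (intro integral_mono ibr) auto
    finally show ?thesis by simp
  qed
  have bdr: "\<bar>Re (h x)\<bar> \<le> Bd" "\<bar>Im (h x)\<bar> \<le> Bd" for x
    using bd[of x] abs_Re_le_cmod abs_Im_le_cmod order_trans by blast+
  show ?thesis
  proof (rule complex_eqI)
    have "Re (\<integral>x. h x \<partial>pair_pmf A B) = (\<integral>x. Re (h x) \<partial>pair_pmf A B)"
      by (rule integral_Re[symmetric], rule ib, rule bd)
    also have "\<dots> = (\<integral>a. \<integral>b. Re (h (a, b)) \<partial>B \<partial>A)"
      by (rule integral_pair_pmf_real[OF bdr(1)])
    also have "\<dots> = (\<integral>a. Re (\<integral>b. h (a, b) \<partial>B) \<partial>A)"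
      by (intro Bochner_Integration.integral_cong refl integral_Re ib bd)
    also have "\<dots> = Re (\<integral>a. \<integral>b. h (a, b) \<partial>B \<partial>A)"
      by (rule integral_Re, rule ib, rule nb)
    finally show "Re (\<integral>x. h x \<partial>pair_pmf A B) = Re (\<integral>a. \<integral>b. h (a, b) \<partial>B \<partial>A)" .
    have "Im (\<integral>x. h x \<partial>pair_pmf A B) = (\<integral>x. Im (h x) \<partial>pair_pmf A B)"
      by (rule integral_Im[symmetric], rule ib, rule bd)
    also have "\<dots> = (\<integral>a. \<integral>b. Im (h (a, b)) \<partial>B \<partial>A)"
      by (rule integral_pair_pmf_real[OF bdr(2)])
    also have "\<dots> = (\<integral>a. Im (\<integral>b. h (a, b) \<partial>B) \<partial>A)"
      by (intro Bochner_Integration.integral_cong refl integral_Im ib bd)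
    also have "\<dots> = Im (\<integral>a. \<integral>b. h (a, b) \<partial>B \<partial>A)"
      by (rule integral_Im, rule ib, rule nb)
    finally show "Im (\<integral>x. h x \<partial>pair_pmf A B) = Im (\<integral>a. \<integral>b. h (a, b) \<partial>B \<partial>A)" .
  qed
qed



definition K :: "nat \<Rightarrow> ((nat \<Rightarrow> real) \<times> (nat \<Rightarrow> real)) pmf \<Rightarrow> (nat \<Rightarrow> real) \<Rightarrow> complex" where
  "K d R t = (\<integral>x. cis (inner_d d t (fst x) - inner_d d t (snd x)) \<partial>R)"

lemma prod_K: "char_fun d A t * cnj (char_fun d B t) = K d (pair_pmf A B) t"
proof -
  have e: "cis (u - v) = cis u * cnj (cis v)" for u v
    by (simp add: cis_cnj cis_mult)
  have "K d (pair_pmf A B) t = (\<integral>a. \<integral>b. cis (inner_d d t a - inner_d d t b) \<partial>B \<partial>A)"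
  proof -
    have pr: "norm (cis (inner_d d t (fst x) - inner_d d t (snd x))) \<le> 1" for x by simp
    show ?thesis unfolding K_def using integral_pair_pmf_complex[OF pr, of A B]
      by (simp only: fst_conv snd_conv)
  qed
  also have "\<dots> = (\<integral>a. cis (inner_d d t a) * (\<integral>b. cnj (cis (inner_d d t b)) \<partial>B) \<partial>A)"
    by (simp only: e integral_mult_right_zero)
  also have "\<dots> = (\<integral>a. cis (inner_d d t a) \<partial>A) * (\<integral>b. cnj (cis (inner_d d t b)) \<partial>B)"
    by (rule integral_mult_left_zero)
  also have "\<dots> = char_fun d A t * cnj (char_fun d B t)"
    by (simp only: Bochner_Integration.integral_cnj char_fun_def)
  finally show ?thesis ..
qed

lemma cmod_sq: "(cmod (x - y))\<^sup>2 = Re (x * cnj x + y * cnj y - 2 * (x * cnj y))"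
  unfolding cmod_power2 by (simp add: power2_eq_square algebra_simps)

lemma cis_sum_prod: "finite I \<Longrightarrow> cis (\<Sum>j\<in>I. f j) = (\<Prod>j\<in>I. cis (f j))"
  by (simp add: cis_conv_exp sum_distrib_left exp_sum)

definition ff :: "nat \<Rightarrow> (nat \<Rightarrow> real) \<Rightarrow> (nat \<Rightarrow> real) \<times> (nat \<Rightarrow> real) \<Rightarrow> (nat \<Rightarrow> real) \<Rightarrow> complex" where
  "ff d \<tau> x t = (\<Prod>j<d. indicator {-\<tau> j..\<tau> j} (t j) *\<^sub>R cis (t j * cd x j))"

lemma ind_box: "t \<in> PiE {..<d} (\<lambda>_. UNIV) \<Longrightarrow>
   indicator (box_d d \<tau>) t = (\<Prod>j<d. indicator {-\<tau> j..\<tau> j} (t j) :: real)"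
  by (auto simp: box_d_def indicator_def PiE_iff)

lemma ff_eq: "t \<in> PiE {..<d} (\<lambda>_. UNIV) \<Longrightarrow>
  ff d \<tau> x t = of_real (indicator (box_d d \<tau>) t) * cis (inner_d d t (fst x) - inner_d d t (snd x))"
proof -
  assume t: "t \<in> PiE {..<d} (\<lambda>_. UNIV)"
  have "inner_d d t (fst x) - inner_d d t (snd x) = (\<Sum>j<d. t j * cd x j)"
    by (simp add: inner_d_def cd_def sum_subtractf[symmetric] right_diff_distrib)
  then have c: "cis (inner_d d t (fst x) - inner_d d t (snd x)) = (\<Prod>j<d. cis (t j * cd x j))"
    by (simp only: cis_sum_prod finite_lessThan)
  have "ff d \<tau> x t = (\<Prod>j<d. of_real (indicator {-\<tau> j..\<tau> j} (t j)) * cis (t j * cd x j))"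
    unfolding ff_def scaleR_conv_of_real ..
  also have "\<dots> = (\<Prod>j<d. of_real (indicator {-\<tau> j..\<tau> j} (t j))) * (\<Prod>j<d. cis (t j * cd x j))"
    by (rule prod.distrib)
  also have "\<dots> = of_real (indicator (box_d d \<tau>) t) * cis (inner_d d t (fst x) - inner_d d t (snd x))"
    unfolding c ind_box[OF t] of_real_prod ..
  finally show ?thesis .
qed

lemma norm_ff: "norm (ff d \<tau> x t) = (\<Prod>j<d. indicator {-\<tau> j..\<tau> j} (t j))"
  unfolding ff_def prod_norm[symmetric] by (simp add: indicator_def)

abbreviation MM :: "nat \<Rightarrow> (nat \<Rightarrow> real) measure" where
  "MM d \<equiv> PiM {..<d} (\<lambda>_. lborel)"

lemma psf: "product_sigma_finite (\<lambda>_::nat. lborel :: real measure)"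
  by (intro product_sigma_finite.intro sigma_finite_lborel)

lemma sfMM: "sigma_finite_measure (MM d)"
  by (rule product_sigma_finite.sigma_finite[OF psf]) simp

lemma pairsf: "pair_sigma_finite (MM d) (measure_pmf R)"
  by (intro pair_sigma_finite.intro sfMM measure_pmf.sigma_finite_measure_axioms)

lemma ind_int: "integrable lborel (\<lambda>s::real. indicator {a..b} s :: real)"
proof -
  have "integrable lborel (\<lambda>s::real. indicator {a..b} s *\<^sub>R (1::real))"
    by (rule borel_integrable_compact[OF compact_Icc]) auto
  then show ?thesis by simp
qed

lemma cis_meas:
  assumes "f \<in> borel_measurable M" shows "(\<lambda>x. cis (f x)) \<in> borel_measurable M"
proof -
  have "(\<lambda>x. cis x) \<in> borel_measurable borel"
    by (intro borel_measurable_continuous_onI continuous_on_cis continuous_on_id)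
  from measurable_compose[OF assms this] show ?thesis .
qed

lemma comp_meas: "j < d \<Longrightarrow> (\<lambda>z. fst z j) \<in> borel_measurable (MM d \<Otimes>\<^sub>M N)"
proof -
  assume "j < d"
  then have "(\<lambda>t. t j) \<in> measurable (MM d) lborel"
    by (intro measurable_component_singleton) simp
  then have m: "(\<lambda>t. t j) \<in> borel_measurable (MM d)" by simp
  show ?thesis by (rule measurable_compose[OF measurable_fst m])
qed

lemma cd_meas: "(\<lambda>z. cd (snd z) j) \<in> borel_measurable (N \<Otimes>\<^sub>M measure_pmf R)"
  by (rule measurable_compose[OF measurable_snd]) simp

lemma ff_meas: "(\<lambda>z. ff d \<tau> (snd z) (fst z)) \<in> borel_measurable (MM d \<Otimes>\<^sub>M measure_pmf R)"
  unfolding ff_def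
proof (rule borel_measurable_prod)
  fix j assume "j \<in> {..<d}"
  then have j: "j < d" by simp
  have i: "(\<lambda>z. indicator {-\<tau> j..\<tau> j} (fst z j) :: real) \<in> borel_measurable (MM d \<Otimes>\<^sub>M measure_pmf R)"
    by (rule measurable_compose[OF comp_meas[OF j] borel_measurable_indicator]) simp
  have c: "(\<lambda>z. cis (fst z j * cd (snd z) j)) \<in> borel_measurable (MM d \<Otimes>\<^sub>M measure_pmf R)"
    by (intro cis_meas borel_measurable_times comp_meas[OF j] cd_meas)
  show "(\<lambda>z. indicator {-\<tau> j..\<tau> j} (fst z j) *\<^sub>R cis (fst z j * cd (snd z) j)) \<in> borel_measurable (MM d \<Otimes>\<^sub>M measure_pmf R)"
    by (rule borel_measurable_scaleR[OF i c])
qed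

lemma prodind_int: "integrable (MM d) (\<lambda>t. \<Prod>j<d. indicator {-\<tau> j..\<tau> j} (t j) :: real)"
  by (rule product_sigma_finite.product_integrable_prod[OF psf]) (auto intro: ind_int)

lemma ff_int: "integrable (MM d \<Otimes>\<^sub>M measure_pmf R) (\<lambda>z. ff d \<tau> (snd z) (fst z))"
proof -
  have 1: "integrable (MM d) (\<lambda>t. \<integral>x. norm (ff d \<tau> x t) \<partial>R)"
    unfolding norm_ff by (simp add: prodind_int)
  have 2: "integrable (measure_pmf R) (\<lambda>x. ff d \<tau> x t)" for t
  proof (rule measure_pmf.integrable_const_bound[where B=1])
    show "AE x in measure_pmf R. norm (ff d \<tau> x t) \<le> 1"
      unfolding norm_ff by (intro AE_I2 prod_le_1) (auto simp: indicator_def)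
  qed simp
  have 3: "AE t in MM d. integrable (measure_pmf R) (\<lambda>x. ff d \<tau> x t)"
    by (rule AE_I2) (rule 2)
  show ?thesis
    by (rule pair_sigma_finite.Fubini_integrable[OF pairsf ff_meas]) (simp_all only: fst_conv snd_conv 1 3)
qed

definition II :: "real \<Rightarrow> real \<Rightarrow> complex" where
  "II s c = (\<integral>t. indicator {-s..s} t *\<^sub>R cis (t * c) \<partial>lborel)"

lemma J_eq: "(\<integral>t. of_real (indicator (box_d d \<tau>) t) * K d R t \<partial>MM d)
   = (\<integral>x. (\<Prod>j<d. II (\<tau> j) (cd x j)) \<partial>R)"
proof -
  have "(\<integral>t. of_real (indicator (box_d d \<tau>) t) * K d R t \<partial>MM d) = (\<integral>t. (\<integral>x. ff d \<tau> x t \<partial>R) \<partial>MM d)"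
  proof (rule Bochner_Integration.integral_cong[OF refl])
    fix t assume "t \<in> space (MM d)"
    then have t: "t \<in> PiE {..<d} (\<lambda>_. UNIV)" by (simp add: space_PiM)
    show "of_real (indicator (box_d d \<tau>) t) * K d R t = (\<integral>x. ff d \<tau> x t \<partial>R)"
      unfolding ff_eq[OF t] K_def by simp
  qed
  also have "\<dots> = (\<integral>x. (\<integral>t. ff d \<tau> x t \<partial>MM d) \<partial>R)"
  proof -
    have "(\<integral>x. \<integral>t. ff d \<tau> x t \<partial>MM d \<partial>R) = (\<integral>t. \<integral>x. ff d \<tau> x t \<partial>R \<partial>MM d)"
      by (rule pair_sigma_finite.Fubini_integral[OF pairsf]) (use ff_int in \<open>simp add: case_prod_unfold\<close>)
    then show ?thesis by simp
  qed
  also have "\<dots> = (\<integral>x. (\<Prod>j<d. II (\<tau> j) (cd x j)) \<partial>R)"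
  proof (rule Bochner_Integration.integral_cong[OF refl])
    fix x
    show "(\<integral>t. ff d \<tau> x t \<partial>MM d) = (\<Prod>j<d. II (\<tau> j) (cd x j))"
      unfolding ff_def II_def
      by (rule product_sigma_finite.product_integral_prod[OF psf, where f = "\<lambda>j s. indicator {-\<tau> j..\<tau> j} s *\<^sub>R cis (s * cd x j)"])
         (auto intro: S_int)
  qed
  finally show ?thesis .
qed



lemma g_eq: "t \<in> space (MM d) \<Longrightarrow> of_real (indicator (box_d d \<tau>) t) * K d R t = (\<integral>x. ff d \<tau> x t \<partial>R)"
proof -
  assume "t \<in> space (MM d)"
  then have t: "t \<in> PiE {..<d} (\<lambda>_. UNIV)" by (simp add: space_PiM)
  show ?thesis unfolding ff_eq[OF t] K_def by simp
qed

lemma g_int: "integrable (MM d) (\<lambda>t. of_real (indicator (box_d d \<tau>) t) * K d R t)"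
proof -
  have "integrable (MM d) (\<lambda>t. \<integral>x. ff d \<tau> (snd (t,x)) (fst (t,x)) \<partial>R)"
    by (rule pair_sigma_finite.integrable_fst'[OF pairsf ff_int])
  then have H: "integrable (MM d) (\<lambda>t. \<integral>x. ff d \<tau> x t \<partial>R)" by simp
  have eq: "integrable (MM d) (\<lambda>t. of_real (indicator (box_d d \<tau>) t) * K d R t) \<longleftrightarrow> integrable (MM d) (\<lambda>t. \<integral>x. ff d \<tau> x t \<partial>R)"
    by (rule Bochner_Integration.integrable_cong[OF refl]) (rule g_eq)
  show ?thesis using H eq by simp
qed

lemma S_II: "S s c = (1 / (2 * s)) *\<^sub>R II s c"
  by (simp add: S_def II_def)

lemma HJ: "(\<Prod>j<d. 1 / (2 * \<tau> j)) * Re (\<integral>t. of_real (indicator (box_d d \<tau>) t) * K d R t \<partial>MM d) = H d R \<tau>"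
proof -
  define P where "P = (\<Prod>j<d. 1 / (2 * \<tau> j))"
  have pe: "(\<Prod>j<d. S (\<tau> j) (cd x j)) = of_real P * (\<Prod>j<d. II (\<tau> j) (cd x j))" for x
    unfolding S_II scaleR_conv_of_real P_def by (simp only: of_real_prod prod.distrib)
  have "H d R \<tau> = Re (\<integral>x. of_real P * (\<Prod>j<d. II (\<tau> j) (cd x j)) \<partial>R)"
    unfolding H_def pe ..
  also have "\<dots> = P * Re (\<integral>x. (\<Prod>j<d. II (\<tau> j) (cd x j)) \<partial>R)"
    by simp
  finally show ?thesis unfolding J_eq P_def ..
qed

lemma lin: "(P::real) * (a + b - 2 * c) = P * a + P * b - 2 * (P * c)"
  by (simp add: algebra_simps)

lemma F_eq: "(\<Prod>j<d. 1 / (2 * \<tau> j)) *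
   (\<integral>t. indicator (box_d d \<tau>) t * (cmod (char_fun d p t - char_fun d q t))\<^sup>2 \<partial>MM d)
  = H d (pair_pmf p p) \<tau> + H d (pair_pmf q q) \<tau> - 2 * H d (pair_pmf p q) \<tau>"
proof -
  define g where "g R t = of_real (indicator (box_d d \<tau>) t) * K d R t" for R t
  have gi: "integrable (MM d) (g R)" for R unfolding g_def by (rule g_int)
  have pt: "indicator (box_d d \<tau>) t * (cmod (char_fun d p t - char_fun d q t))\<^sup>2
     = Re (g (pair_pmf p p) t + g (pair_pmf q q) t - 2 * g (pair_pmf p q) t)" for t
    unfolding cmod_sq prod_K g_def by (simp add: algebra_simps)
  have "(\<integral>t. indicator (box_d d \<tau>) t * (cmod (char_fun d p t - char_fun d q t))\<^sup>2 \<partial>MM d)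
      = (\<integral>t. Re (g (pair_pmf p p) t + g (pair_pmf q q) t - 2 * g (pair_pmf p q) t) \<partial>MM d)"
    by (simp add: pt)
  also have "\<dots> = Re (\<integral>t. g (pair_pmf p p) t + g (pair_pmf q q) t - 2 * g (pair_pmf p q) t \<partial>MM d)"
    by (rule integral_Re) (intro Bochner_Integration.integrable_add Bochner_Integration.integrable_diff integrable_mult_right gi)
  also have "\<dots> = Re (integral\<^sup>L (MM d) (g (pair_pmf p p))) + Re (integral\<^sup>L (MM d) (g (pair_pmf q q)))
      - 2 * Re (integral\<^sup>L (MM d) (g (pair_pmf p q)))"
    by (simp add: gi Bochner_Integration.integral_add Bochner_Integration.integral_diff)
  finally have eqI: "(\<integral>t. indicator (box_d d \<tau>) t * (cmod (char_fun d p t - char_fun d q t))\<^sup>2 \<partial>MM d) =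
     Re (integral\<^sup>L (MM d) (g (pair_pmf p p))) + Re (integral\<^sup>L (MM d) (g (pair_pmf q q)))
      - 2 * Re (integral\<^sup>L (MM d) (g (pair_pmf p q)))" .
  show ?thesis unfolding eqI lin unfolding g_def HJ ..
qed



lemma iter_lim_lin:
  "iter_lim n k F1 \<tau> L1 \<Longrightarrow> iter_lim n k F2 \<tau> L2 \<Longrightarrow> iter_lim n k F3 \<tau> L3 \<Longrightarrow>
   iter_lim n k (\<lambda>\<tau>. F1 \<tau> + F2 \<tau> - 2 * F3 \<tau>) \<tau> (L1 + L2 - 2 * L3)"
proof (induction n arbitrary: k \<tau> L1 L2 L3)
  case 0
  then show ?case by simp
next
  case (Suc n)
  from Suc.prems obtain G1 G2 G3 where
    g1: "\<forall>\<^sub>F s in at_top. iter_lim n (Suc k) F1 (\<tau>(k := s)) (G1 s)" "(G1 \<longlongrightarrow> L1) at_top" and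
    g2: "\<forall>\<^sub>F s in at_top. iter_lim n (Suc k) F2 (\<tau>(k := s)) (G2 s)" "(G2 \<longlongrightarrow> L2) at_top" and
    g3: "\<forall>\<^sub>F s in at_top. iter_lim n (Suc k) F3 (\<tau>(k := s)) (G3 s)" "(G3 \<longlongrightarrow> L3) at_top"
    by auto
  have "\<forall>\<^sub>F s in at_top. iter_lim n (Suc k) (\<lambda>\<tau>. F1 \<tau> + F2 \<tau> - 2 * F3 \<tau>) (\<tau>(k := s)) (G1 s + G2 s - 2 * G3 s)"
    using g1(1) g2(1) g3(1) by eventually_elim (rule Suc.IH)
  moreover have "((\<lambda>s. G1 s + G2 s - 2 * G3 s) \<longlongrightarrow> L1 + L2 - 2 * L3) at_top"
    by (intro tendsto_intros g1(2) g2(2) g3(2))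
  ultimately show ?case by auto
qed

lemma Vval:
  assumes A: "set_pmf A \<subseteq> PiE {..<d} (\<lambda>_. UNIV)" and B: "set_pmf B \<subseteq> PiE {..<d} (\<lambda>_. UNIV)"
  shows "V d (pair_pmf A B) 0 \<tau> = 1 - measure_pmf.expectation (pair_pmf A B) (\<lambda>(a, b). if a \<noteq> b then 1 else 0)"
proof -
  have "V d (pair_pmf A B) 0 \<tau> = Re (\<integral>x. complex_of_real (if \<forall>j\<in>{0..<d}. cd x j = 0 then 1 else 0) \<partial>pair_pmf A B)"
    unfolding V_def by (simp add: if_distrib cong: if_cong)
  also have "\<dots> = (\<integral>x. (if \<forall>j\<in>{0..<d}. cd x j = 0 then 1 else 0) \<partial>pair_pmf A B)"
    by simp
  also have "\<dots> = (\<integral>x. 1 - (\<lambda>(a, b). if a \<noteq> b then 1 else 0) x \<partial>pair_pmf A B)"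
  proof (rule integral_cong_AE)
    show "AE x in measure_pmf (pair_pmf A B). (if \<forall>j\<in>{0..<d}. cd x j = 0 then 1 else 0 :: real) = 1 - (\<lambda>(a, b). if a \<noteq> b then 1 else 0) x"
    proof (rule AE_pmfI)
      fix x assume "x \<in> set_pmf (pair_pmf A B)"
      then obtain a b where x: "x = (a, b)" "a \<in> PiE {..<d} (\<lambda>_. UNIV)" "b \<in> PiE {..<d} (\<lambda>_. UNIV)"
        using A B by (cases x) auto
      have "(\<forall>j\<in>{0..<d}. cd x j = 0) \<longleftrightarrow> a = b"
      proof
        assume "\<forall>j\<in>{0..<d}. cd x j = 0"
        then show "a = b" using x by (intro PiE_ext[OF x(2) x(3)]) (auto simp: cd_def)
      qed (auto simp: x cd_def)
      then show "(if \<forall>j\<in>{0..<d}. cd x j = 0 then 1 else 0 :: real) = 1 - (\<lambda>(a, b). if a \<noteq> b then 1 else 0) x"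
        using x by auto
    qed
  qed simp_all
  also have "\<dots> = 1 - measure_pmf.expectation (pair_pmf A B) (\<lambda>(a, b). if a \<noteq> b then 1 else 0)"
  proof (subst Bochner_Integration.integral_diff)
    show "integrable (measure_pmf (pair_pmf A B)) (\<lambda>(a, b). if a \<noteq> b then 1 else 0 :: real)"
      by (rule measure_pmf.integrable_const_bound[where B=1]) auto
  qed simp_all
  finally show ?thesis .
qed

theorem mainTheorem2:
  fixes d :: nat and p q :: "(nat \<Rightarrow> real) pmf"
  assumes "set_pmf p \<subseteq> PiE {..<d} (\<lambda>_. UNIV)"
      and "set_pmf q \<subseteq> PiE {..<d} (\<lambda>_. UNIV)"
  shows "iter_lim d 0
           (\<lambda>\<tau>. (\<Prod>j<d. 1 / (2 * \<tau> j)) *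
                 (\<integral>t. indicator (box_d d \<tau>) t * (cmod (char_fun d p t - char_fun d q t))\<^sup>2
                   \<partial>(PiM {..<d} (\<lambda>_. lborel))))
           (\<lambda>_. 0) (eps01 p q)"
proof -
  have L: "iter_lim d 0 (\<lambda>\<tau>. H d (pair_pmf p p) \<tau> + H d (pair_pmf q q) \<tau> - 2 * H d (pair_pmf p q) \<tau>) (\<lambda>_. 0)
      (V d (pair_pmf p p) 0 (\<lambda>_. 0) + V d (pair_pmf q q) 0 (\<lambda>_. 0) - 2 * V d (pair_pmf p q) 0 (\<lambda>_. 0))"
    by (intro iter_lim_lin iter_lim_H) simp_all
  have e: "V d (pair_pmf p p) 0 (\<lambda>_. 0) + V d (pair_pmf q q) 0 (\<lambda>_. 0) - 2 * V d (pair_pmf p q) 0 (\<lambda>_. 0) = eps01 p q"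
    unfolding Vval[OF assms(1) assms(1)] Vval[OF assms(2) assms(2)] Vval[OF assms(1) assms(2)] eps01_def
    by simp
  have f: "(\<lambda>\<tau>. (\<Prod>j<d. 1 / (2 * \<tau> j)) *
                 (\<integral>t. indicator (box_d d \<tau>) t * (cmod (char_fun d p t - char_fun d q t))\<^sup>2
                   \<partial>(PiM {..<d} (\<lambda>_. lborel)))) =
     (\<lambda>\<tau>. H d (pair_pmf p p) \<tau> + H d (pair_pmf q q) \<tau> - 2 * H d (pair_pmf p q) \<tau>)"
    by (rule ext) (rule F_eq)
  show ?thesis unfolding f e[symmetric] by (rule L)
qed


end
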